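(* For all $n\in\mathbb N$ the following hold in $\mathbb V$: $$\sum_{k=0}^n G_{n-k}\star W_{-k}\,q^{2k-n}=\sum_{k=0}^n W_{-k}\star G_{n-k}\,q^{n-2k}=[2]_q^n(xy+yx)^nx,$$ $$\sum_{k=0}^n G_{n-k}\star W_{k+1}\,q^{n-2k}=\sum_{k=0}^n W_{k+1}\star G_{n-k}\,q^{2k-n}=[2]_q^n\,y(xy+yx)^n,$$ $$\sum_{k=0}^n \tilde G_{n-k}\star W_{-k}\,q^{n-2k}=\sum_{k=0}^n W_{-k}\star\tilde G_{n-k}\,q^{2k-n}=[2]_q^n\,x(xy+yx)^n,$$ $$\sum_{k=0}^n \tilde G_{n-k}\star W_{k+1}\,q^{2k-n}=\sum_{k=0}^n W_{k+1}\star\tilde G_{n-k}\,q^{n-2k}=[2]_q^n(xy+yx)^ny.$$ On the right-hand sides, powers and products are taken in the free (concatenation) product.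
   Context: Let $\mathbb F$ be a field and let $q\in\mathbb F$ be nonzero and not a root of unity. Let $[m]_q=(q^m-q^{-m})/(q-q^{-1})$. Let $\mathbb V$ be the free associative $\mathbb F$-algebra on noncommuting $x,y$, with basis the words (including $1$). Juxtaposition denotes concatenation. Set $\langle x,x\rangle=\langle y,y\rangle=2$ and $\langle x,y\rangle=\langle y,x\rangle=-2$. The $q$-shuffle product $\star$ is the bilinear product determined as follows: - $1\star v=v\star 1=v$; - for nontrivial words $u=u_1\cdots u_r$ and $v=v_1\cdots v_s$, $$u\star v=u_1((u_2\cdots u_r)\star v)+v_1(u\star(v_2\cdots v_s))q^{\langle u_1,v_1\rangle+\cdots+\langle u_r,v_1\rangle}.$$ This makes $\mathbb V$ an associative algebra, the $q$-shuffle algebra. For $k\in\mathbb N$: - $W_{-k}=xyx\cdots x$ is the alternating word of length $2k+1$ beginning and ending with $x$; - $W_{k+1}=yxy\cdots y$ is the alternating word of length $2k+1$ beginning and ending with $y$; - $G_k=yxyx\cdots yx$ is the word of length $2k$; - $\tilde G_k=xyxy\cdots xy$ is the word of length $2k$; - $G_0=\tilde G_0=1$. *)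

theory Defs
  imports Main
begin

text \<open>An element of V is represented by its
coefficient function on words (letter list \<Rightarrow> 'a). All elements occurring below have
finite support, and all operations are defined by finite sums per coefficient.\<close>

datatype letter = X | Y

type_synonym 'a vec = "letter list \<Rightarrow> 'a"

definition ip :: "letter \<Rightarrow> letter \<Rightarrow> int" where
  "ip a b = (if a = b then 2 else -2)"

definition word :: "letter list \<Rightarrow> 'a::field vec" where
  "word v = (\<lambda>w. if w = v then 1 else 0)"

definition vadd :: "'a::field vec \<Rightarrow> 'a vec \<Rightarrow> 'a vec" where
  "vadd f g = (\<lambda>w. f w + g w)"

definition smul :: "'a::field \<Rightarrow> 'a vec \<Rightarrow> 'a vec" where
  "smul c f = (\<lambda>w. c * f w)"

definition prepend :: "letter \<Rightarrow> 'a::field vec \<Rightarrow> 'a vec" where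
  "prepend a f = (\<lambda>w. case w of [] \<Rightarrow> 0 | c # w' \<Rightarrow> (if c = a then f w' else 0))"

fun wstar :: "'a::field \<Rightarrow> letter list \<Rightarrow> letter list \<Rightarrow> 'a vec" where
  "wstar q [] v = word v"
| "wstar q (a # u) [] = word (a # u)"
| "wstar q (a # u) (b # v) =
     vadd (prepend a (wstar q u (b # v)))
          (smul (q powi (\<Sum>c\<leftarrow>a # u. ip c b)) (prepend b (wstar q (a # u) v)))"

text \<open>bilinear extension; only pairs with |a|+|b|=|w| contribute to the coefficient of w\<close>
definition star :: "'a::field \<Rightarrow> 'a vec \<Rightarrow> 'a vec \<Rightarrow> 'a vec" where
  "star q f g = (\<lambda>w. \<Sum>i\<le>length w.
      \<Sum>a\<in>{a. length a = i}. \<Sum>b\<in>{b. length b = length w - i}.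
        f a * g b * wstar q a b w)"

definition cmul :: "'a::field vec \<Rightarrow> 'a vec \<Rightarrow> 'a vec" where
  "cmul f g = (\<lambda>w. \<Sum>i\<le>length w. f (take i w) * g (drop i w))"

primrec cpow :: "'a::field vec \<Rightarrow> nat \<Rightarrow> 'a vec" where
  "cpow f 0 = word []"
| "cpow f (Suc n) = cmul f (cpow f n)"

definition other :: "letter \<Rightarrow> letter" where
  "other a = (if a = X then Y else X)"

primrec alt :: "letter \<Rightarrow> nat \<Rightarrow> letter list" where
  "alt a 0 = []"
| "alt a (Suc m) = a # alt (other a) m"

definition Wneg :: "nat \<Rightarrow> letter list" where "Wneg k = alt X (2*k+1)"   (* W_{-k} *)
definition Wpos :: "nat \<Rightarrow> letter list" where "Wpos k = alt Y (2*k+1)"   (* W_{k+1} *)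
definition G :: "nat \<Rightarrow> letter list" where "G k = alt Y (2*k)"
definition Gt :: "nat \<Rightarrow> letter list" where "Gt k = alt X (2*k)"

definition qint :: "'a::field \<Rightarrow> nat \<Rightarrow> 'a" where
  "qint q m = (q ^ m - inverse q ^ m) / (q - inverse q)"

definition xyyx :: "'a::field vec" where
  "xyyx = vadd (word [X, Y]) (word [Y, X])"

end

theory Submission
  imports Defs
begin

lemma sum_rev_atMost: "(\<Sum>k\<le>(m::nat). f k) = (\<Sum>k\<le>m. f (m - k))"
  by (rule sum.reindex_bij_witness[where i="\<lambda>k. m - k" and j="\<lambda>k. m - k"]) auto

lemma other_simps[simp]: "other X = Y" "other Y = X" "other (other a) = a"
  by (cases a; simp add: other_def)+

lemma ip_other_left: "ip (other a) b = - ip a b"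
  by (cases a; cases b) (auto simp: ip_def other_def)

lemma ip_other_both[simp]: "ip (other a) (other b) = ip a b"
  by (cases a; cases b) (auto simp: ip_def other_def)

lemma wt_alt: "(\<Sum>c\<leftarrow>alt a m. ip c b) = (if even m then 0 else ip a b)"
  by (induction m arbitrary: a) (auto simp: ip_other_left)

definition wt :: "letter list \<Rightarrow> letter \<Rightarrow> int" where
  "wt u b = (\<Sum>c\<leftarrow>u. ip c b)"

lemma wt_simps[simp]:
  "wt (Wneg k) X = 2" "wt (Wneg k) Y = -2" "wt (Wpos k) X = -2" "wt (Wpos k) Y = 2"
  "wt (G k) b = 0" "wt (Gt k) b = 0"
  by (simp_all only: wt_def wt_alt Wneg_def Wpos_def G_def Gt_def; simp add: ip_def)+

lemma struct_simps[simp]: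
  "Wneg k = X # G k" "Wpos k = Y # Gt k" "G 0 = []" "Gt 0 = []"
  by (simp_all add: Wneg_def Wpos_def G_def Gt_def)

lemma G_Suc: "G (Suc k) = Y # Wneg k" and Gt_Suc: "Gt (Suc k) = X # Wpos k"
  by (simp_all add: Wneg_def Wpos_def G_def Gt_def del: struct_simps)

definition hdT :: "letter list \<Rightarrow> letter \<Rightarrow> (letter list \<Rightarrow> 'a::field) \<Rightarrow> 'a" where
  "hdT u c f = (case u of [] \<Rightarrow> 0 | a # u' \<Rightarrow> if a = c then f u' else 0)"

lemma wstar_right_Nil[simp]: "wstar q u [] = word u"
  by (cases u) auto

lemma wstar_Nil: "wstar q u v [] = (if u = [] \<and> v = [] then 1 else 0)"
  by (cases "(q,u,v)" rule: wstar.cases) (auto simp: word_def vadd_def smul_def prepend_def)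

lemma wstar_Cons: "wstar q u v (c # w) =
   hdT u c (\<lambda>u'. wstar q u' v w) + q powi (wt u c) * hdT v c (\<lambda>v'. wstar q u v' w)"
  by (cases "(q,u,v)" rule: wstar.cases)
     (auto simp: word_def vadd_def smul_def prepend_def hdT_def wt_def split: list.splits)

lemma hdT_simps[simp]:
  "hdT (Wneg k) c f = (if c = X then f (G k) else 0)"
  "hdT (Wpos k) c f = (if c = Y then f (Gt k) else 0)"
  "hdT (G k) c f = (if k = 0 \<or> c \<noteq> Y then 0 else f (Wneg (k - 1)))"
  "hdT (Gt k) c f = (if k = 0 \<or> c \<noteq> X then 0 else f (Wpos (k - 1)))"
    apply (simp add: hdT_def)
   apply (simp add: hdT_def)
  apply (cases k; simp add: hdT_def G_Suc)
  apply (cases k; simp add: hdT_def Gt_Suc)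
  done

lemma wstar_len: "length w \<noteq> length u + length v \<Longrightarrow> wstar q u v w = 0"
proof (induction w arbitrary: u v)
  case Nil then show ?case by (simp add: wstar_Nil)
next
  case (Cons c w)
  show ?case unfolding wstar_Cons using Cons
    by (auto simp: hdT_def word_def split: list.splits)
qed

lemma finite_len: "finite {a::letter list. length a = i}"
proof -
  have "(UNIV::letter set) = {X, Y}" using letter.exhaust by auto
  then have "finite (UNIV::letter set)" by (metis finite.emptyI finite_insert)
  from finite_lists_length_eq[OF this, of i] show ?thesis by simp
qed

lemma sum_if_const: "(\<Sum>x\<in>S. if P then g x else 0) = (if P then (\<Sum>x\<in>S. g x) else 0)"
  by simp

lemma double_delta:
  assumes "finite A" "finite B"
  shows "(\<Sum>a\<in>A. \<Sum>b\<in>B. (if a = u then 1 else 0) * (if b = v then 1 else 0) * h a b)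
     = (if u \<in> A \<and> v \<in> B then h u v else (0::'a::field))"
proof -
  have "(\<Sum>a\<in>A. \<Sum>b\<in>B. (if a = u then 1 else 0) * (if b = v then 1 else 0) * h a b)
     = (\<Sum>a\<in>A. if a = u then (\<Sum>b\<in>B. if b = v then h a b else 0) else 0)"
    by (rule sum.cong[OF refl]) (auto intro: sum.cong)
  also have "\<dots> = (\<Sum>a\<in>A. if a = u then (if v \<in> B then h a v else 0) else 0)"
    using assms by (simp add: sum.delta)
  also have "\<dots> = (if u \<in> A \<and> v \<in> B then h u v else 0)"
    using assms by (simp add: sum.delta)
  finally show ?thesis .
qed

lemma star_word: "star q (word u) (word v) = wstar q u v"
proof
  fix w
  have "star q (word u) (word v) w = (\<Sum>i\<le>length w. if i = length u \<and> length w - i = length v then wstar q u v w else 0)"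
    unfolding star_def
  proof (rule sum.cong[OF refl])
    fix i assume "i \<in> {..length w}"
    show "(\<Sum>a\<in>{a. length a = i}. \<Sum>b\<in>{b. length b = length w - i}. word u a * word v b * wstar q a b w) =
      (if i = length u \<and> length w - i = length v then wstar q u v w else 0)"
      unfolding word_def by (subst double_delta[OF finite_len finite_len]) auto
  qed
  also have "\<dots> = wstar q u v w"
  proof (cases "length w = length u + length v")
    case True
    then have "(\<Sum>i\<le>length w. if i = length u \<and> length w - i = length v then wstar q u v w else 0)
       = (\<Sum>i\<le>length w. if i = length u then wstar q u v w else 0)"
      by (intro sum.cong) auto
    then show ?thesis using True by (simp add: sum.delta)
  next
    case False
    then have "(\<Sum>i\<le>length w. if i = length u \<and> length w - i = length v then wstar q u v w else 0)
       = (\<Sum>i\<le>length w. 0)"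
      by (intro sum.cong) auto
    then show ?thesis using wstar_len[OF False] by simp
  qed
  finally show "star q (word u) (word v) w = wstar q u v w" .
qed


lemma map_other_alt: "map other (alt a m) = alt (other a) m"
  by (induction m arbitrary: a) auto

lemma map_other_words[simp]:
  "map other (G k) = Gt k" "map other (Gt k) = G k"
  "map other (Wneg k) = Wpos k" "map other (Wpos k) = Wneg k"
  by (simp_all add: G_def Gt_def Wneg_def Wpos_def map_other_alt del: struct_simps)

lemma map_other_inv[simp]: "map other (map other w) = w"
  by (induction w) auto

lemma hdT_map_other: "hdT (map other u) (other c) f = hdT u c (\<lambda>u'. f (map other u'))"
  by (cases u) (auto simp: hdT_def dest: arg_cong[where f=other])

lemma wt_map_other[simp]: "wt (map other u) (other c) = wt u c"
  by (simp add: wt_def comp_def)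

lemma wstar_swap: "wstar q (map other u) (map other v) (map other w) = wstar q u v w"
proof (induction w arbitrary: u v)
  case Nil then show ?case by (simp add: wstar_Nil)
next
  case (Cons c w)
  show ?case
    by (simp add: wstar_Cons hdT_map_other Cons.IH
          del: list.map(2) wt_map_other, simp add: wstar_Cons hdT_map_other Cons.IH)
qed

lemma wstar_swap': "wstar q u v (map other w) = wstar q (map other u) (map other v) w"
  using wstar_swap[of q "map other u" "map other v" w] by (simp add: comp_def)

lemma cmul_Nil: "cmul f g [] = f [] * g []"
  by (simp add: cmul_def)

lemma cmul_Cons: "cmul f g (a # w) = f [] * g (a # w) + cmul (\<lambda>u. f (a # u)) g w"
  unfolding cmul_def by (simp add: sum.atMost_Suc_shift del: sum.atMost_Suc)

lemma cmul_zero_left: "cmul (\<lambda>_. 0) g = (\<lambda>_. 0)"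
  by (simp add: cmul_def fun_eq_iff)

lemma word_Cons_fun: "(\<lambda>u. word (b # v) (a # u)) = (if a = b then word v else (\<lambda>_. 0))"
  by (auto simp: word_def fun_eq_iff)

lemma word_Nil_Cons[simp]: "word [] (a # u) = 0" and word_Cons_Nil[simp]: "word (a # v) [] = 0"
  and word_Nil_Nil[simp]: "word [] [] = 1"
  by (simp_all add: word_def)

lemma cmul_word_Nil: "cmul (word []) g = g"
proof
  fix w show "cmul (word []) g w = g w"
    by (cases w) (simp_all add: cmul_Nil cmul_Cons cmul_zero_left)
qed

lemma cmul_word_one_Cons: "cmul (word [b]) g (a # w) = (if a = b then g w else 0)"
  by (simp add: cmul_Cons word_Cons_fun cmul_word_Nil cmul_zero_left)

lemma cmul_word_one_Nil: "cmul (word [b]) g [] = 0"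
  by (simp add: cmul_Nil)

lemma cmul_word_one_fun: "(\<lambda>u. cmul (word [b]) g (a # u)) = (if a = b then g else (\<lambda>_. 0))"
  by (auto simp: cmul_word_one_Cons fun_eq_iff)

lemma xyyx_Cons_fun: "(\<lambda>u. xyyx (a # u)) = word [other a]"
  by (cases a) (auto simp: xyyx_def vadd_def word_def fun_eq_iff)

lemma xyyx_Nil: "xyyx [] = 0"
  by (simp add: xyyx_def vadd_def)

lemma cpow_Nil: "cpow xyyx n [] = (if n = 0 then 1 else 0)"
  by (cases n) (simp_all add: cmul_Nil xyyx_Nil)

lemma cpow_0_Cons: "cpow xyyx 0 (a # w) = 0"
  by simp

lemma cpow_Suc_Cons: "cpow xyyx (Suc m) (a # w) = cmul (word [other a]) (cpow xyyx m) w"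
  by (simp add: cmul_Cons xyyx_Nil xyyx_Cons_fun)

lemma cpow_Suc_fun: "(\<lambda>u. cpow xyyx (Suc m) (a # u)) = cmul (word [other a]) (cpow xyyx m)"
  by (simp only: cpow_Suc_Cons fun_eq_iff, simp)

lemma cmul_swap: "cmul f g (map other w) = cmul (\<lambda>u. f (map other u)) (\<lambda>u. g (map other u)) w"
  by (simp add: cmul_def take_map drop_map)

lemma word_swap_fun: "(\<lambda>u. word v (map other u)) = word (map other v)"
proof
  fix u show "word v (map other u) = word (map other v) u"
    by (auto simp: word_def comp_def dest: arg_cong[where f="map other"])
qed

lemma xyyx_swap_fun: "(\<lambda>u. xyyx (map other u)) = xyyx"
  unfolding xyyx_def vadd_def
  by (simp add: word_swap_fun[of "[X,Y]", unfolded fun_eq_iff, rule_format]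
                word_swap_fun[of "[Y,X]", unfolded fun_eq_iff, rule_format] add.commute)

lemma cpow_swap_fun: "(\<lambda>u. cpow xyyx n (map other u)) = cpow xyyx n"
proof (induction n)
  case 0 then show ?case by (simp add: word_swap_fun)
next
  case (Suc n) then show ?case by (simp add: cmul_swap xyyx_swap_fun)
qed


definition cc :: "'a::field \<Rightarrow> 'a" where "cc q = q + inverse q"

definition tR :: "'a::field \<Rightarrow> nat \<Rightarrow> 'a vec" where
  "tR q n w = cc q ^ n * cmul (cpow xyyx n) (word [X]) w"
definition tGG :: "'a::field \<Rightarrow> nat \<Rightarrow> 'a vec" where
  "tGG q n w = (if n = 0 then word [] w else cc q ^ n * cmul (cmul (word [Y]) (cpow xyyx (n - 1))) (word [X]) w)"
definition tWW :: "'a::field \<Rightarrow> nat \<Rightarrow> 'a vec" where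
  "tWW q n w = q * cc q ^ Suc n * cmul (cmul (word [X]) (cpow xyyx n)) (word [X]) w"
definition tY :: "'a::field \<Rightarrow> nat \<Rightarrow> 'a vec" where
  "tY q n w = cc q ^ n * cmul (word [Y]) (cpow xyyx n) w"
definition tXr :: "'a::field \<Rightarrow> nat \<Rightarrow> 'a vec" where
  "tXr q n w = cc q ^ n * cmul (word [X]) (cpow xyyx n) w"
definition tS :: "'a::field \<Rightarrow> nat \<Rightarrow> 'a vec" where
  "tS q n w = cc q ^ n * cpow xyyx n w"

lemma cmul_cmul_word_Nil: "cmul (cmul (word [b]) g) h [] = 0"
  by (simp add: cmul_Nil)

lemma cmul_cmul_word_Cons: "cmul (cmul (word [b]) g) h (a # w) = (if a = b then cmul g h w else 0)"
  by (subst cmul_Cons) (simp add: cmul_word_one_Nil cmul_word_one_fun cmul_zero_left)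

lemma cmul_cpow_Cons: "cmul (cpow xyyx n) h (a # w) =
   (if n = 0 then h (a # w) else cmul (cmul (word [other a]) (cpow xyyx (n - 1))) h w)"
  apply (subst cmul_Cons)
  apply (cases n)
   apply (simp add: cmul_zero_left)
  apply (simp only: cpow_Suc_fun cpow_Nil)
  apply simp
  done

lemma word_one_Cons: "word [b] (a # w) = (if a = b then word [] w else 0)"
  by (simp add: word_def)

lemma tR_Nil: "tR q n [] = 0"
  by (cases n) (simp_all add: tR_def cmul_Nil)

lemma tR_X: "tR q n (X # w) = tGG q n w"
  by (simp add: tR_def tGG_def cmul_cpow_Cons word_one_Cons cmul_word_Nil)

lemma tR_Y0: "tR q 0 (Y # w) = 0"
  by (simp add: tR_def cmul_cpow_Cons word_one_Cons cmul_word_Nil)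

lemma tR_YS: "q \<noteq> 0 \<Longrightarrow> tR q (Suc m) (Y # w) = inverse q * tWW q m w"
  by (simp add: tR_def tWW_def cmul_cpow_Cons del: cpow.simps)

lemma tGG_Nil: "tGG q n [] = (if n = 0 then 1 else 0)"
  by (simp add: tGG_def cmul_cmul_word_Nil)

lemma tGG_X: "tGG q n (X # w) = 0"
  by (simp add: tGG_def cmul_cmul_word_Cons)

lemma tGG_Y0: "tGG q 0 (Y # w) = 0"
  by (simp add: tGG_def)

lemma tGG_YS: "tGG q (Suc m) (Y # w) = cc q * tR q m w"
  by (simp add: tGG_def tR_def cmul_cmul_word_Cons cmul_word_Nil)

lemma tWW_Nil: "tWW q n [] = 0"
  by (simp add: tWW_def cmul_cmul_word_Nil)

lemma tWW_X: "tWW q n (X # w) = q * cc q * tR q n w"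
  by (simp add: tWW_def tR_def cmul_cmul_word_Cons cmul_word_Nil)

lemma tWW_Y: "tWW q n (Y # w) = 0"
  by (simp add: tWW_def cmul_cmul_word_Cons)

lemma tY_Nil: "tY q n [] = 0"
  by (simp add: tY_def cmul_word_one_Nil)
lemma tY_X: "tY q n (X # w) = 0"
  by (simp add: tY_def cmul_word_one_Cons)
lemma tY_Y: "tY q n (Y # w) = tS q n w"
  by (simp add: tY_def tS_def cmul_word_one_Cons)

lemma tXr_swap: "tXr q n w = tY q n (map other w)"
  by (simp add: tXr_def tY_def cmul_swap word_swap_fun cpow_swap_fun)

lemma tS_Nil: "tS q n [] = (if n = 0 then 1 else 0)"
  by (simp add: tS_def cpow_Nil)
lemma tS_0: "tS q 0 (a # w) = 0"
  by (simp add: tS_def)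
lemma tS_XS: "tS q (Suc m) (X # w) = cc q * tY q m w"
  by (simp only: tS_def tY_def cpow_Suc_Cons) simp
lemma tS_YS: "tS q (Suc m) (Y # w) = cc q * tXr q m w"
  by (simp only: tS_def tXr_def cpow_Suc_Cons) simp


declare struct_simps(1,2)[simp del] wstar_right_Nil[simp del] wstar.simps[simp del]

lemma nonempty_simps[simp]: "Wneg k \<noteq> []" "Wpos k \<noteq> []"
  by (simp_all add: struct_simps)

lemma G_Nil_iff[simp]: "G k = [] \<longleftrightarrow> k = 0" and Gt_Nil_iff[simp]: "Gt k = [] \<longleftrightarrow> k = 0"
  by (cases k; simp add: G_Suc Gt_Suc)+

lemma hdT_Nil[simp]: "hdT [] c f = 0"
  by (simp add: hdT_def)

lemma powi_eq: "(q::'a::field) \<noteq> 0 \<Longrightarrow> a + b = c + d \<Longrightarrow> q powi a * (q powi b * W) = q powi c * (q powi d * W)"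
  by (simp add: mult.assoc[symmetric] power_int_add[symmetric])

lemma powi_eq1: "(q::'a::field) \<noteq> 0 \<Longrightarrow> a = c + d \<Longrightarrow> q powi a * W = q powi c * (q powi d * W)"
  by (simp add: mult.assoc[symmetric] power_int_add[symmetric])

lemma inv_powi: "inverse (q::'a::field) = q powi (-1)"
  by (simp add: power_int_minus)

definition fA :: "'a::field \<Rightarrow> nat \<Rightarrow> 'a vec" where
  "fA q n w = (\<Sum>k\<le>n. q powi (int n - 2*int k) * wstar q (Wneg k) (G (n-k)) w)"
definition fB :: "'a::field \<Rightarrow> nat \<Rightarrow> 'a vec" where
  "fB q n w = (\<Sum>k\<le>n. q powi (2*int k - int n) * wstar q (G (n-k)) (Wneg k) w)"
definition fGG :: "'a::field \<Rightarrow> nat \<Rightarrow> 'a vec" where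
  "fGG q n w = (\<Sum>k\<le>n. q powi (int n - 2*int k) * wstar q (G k) (G (n-k)) w)"
definition fWW :: "'a::field \<Rightarrow> nat \<Rightarrow> 'a vec" where
  "fWW q n w = (\<Sum>k\<le>n. q powi (int n - 2*int k) * wstar q (Wneg k) (Wneg (n-k)) w)"

lemma fA_Nil: "fA q n [] = 0" by (simp add: fA_def wstar_Nil)
lemma fB_Nil: "fB q n [] = 0" by (simp add: fB_def wstar_Nil)
lemma fWW_Nil: "fWW q n [] = 0" by (simp add: fWW_def wstar_Nil)
lemma fGG_Nil: "fGG q n [] = (if n = 0 then 1 else 0)"
proof -
  have "fGG q n [] = (\<Sum>k\<le>n. if k = 0 then (if n = 0 then 1 else 0) else 0)"
    unfolding fGG_def by (rule sum.cong) (auto simp: wstar_Nil)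
  then show ?thesis by (simp add: sum.delta')
qed

lemma fA_X: "fA q n (X # w) = fGG q n w"
  unfolding fA_def fGG_def by (simp add: wstar_Cons)

lemma fA_Y0: "fA q 0 (Y # w) = 0"
  unfolding fA_def by (simp add: wstar_Cons)

lemma fA_YS: assumes "q \<noteq> 0" shows "fA q (Suc m) (Y # w) = inverse q * fWW q m w"
proof -
  have "fA q (Suc m) (Y # w) = (\<Sum>k\<le>m. q powi (int (Suc m) - 2*int k) * (q powi (-2) * wstar q (Wneg k) (Wneg (m-k)) w))"
    unfolding fA_def
    by (simp only: sum.atMost_Suc) (simp add: wstar_Cons)
  also have "\<dots> = inverse q * fWW q m w"
    unfolding fWW_def sum_distrib_left inv_powi
    by (rule sum.cong[OF refl]) (rule powi_eq[OF assms], simp)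
  finally show ?thesis .
qed

lemma fB_X: "fB q n (X # w) = fGG q n w"
proof -
  have "fB q n (X # w) = (\<Sum>k\<le>n. q powi (2*int k - int n) * wstar q (G (n-k)) (G k) w)"
    unfolding fB_def by (simp add: wstar_Cons)
  also have "\<dots> = fGG q n w"
    unfolding fGG_def by (subst sum_rev_atMost) (rule sum.cong[OF refl], simp add: of_nat_diff)
  finally show ?thesis .
qed

lemma fB_Y0: "fB q 0 (Y # w) = 0"
  unfolding fB_def by (simp add: wstar_Cons)

lemma fB_YS: assumes "q \<noteq> 0" shows "fB q (Suc m) (Y # w) = inverse q * fWW q m w"
proof -
  have "fB q (Suc m) (Y # w) = (\<Sum>k\<le>m. q powi (2*int k - int (Suc m)) * wstar q (Wneg (m-k)) (Wneg k) w)"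
    unfolding fB_def by (simp only: sum.atMost_Suc) (simp add: wstar_Cons Suc_diff_le)
  also have "\<dots> = (\<Sum>k\<le>m. q powi (2*int (m-k) - int (Suc m)) * wstar q (Wneg k) (Wneg (m-k)) w)"
    by (subst sum_rev_atMost) (rule sum.cong[OF refl], simp)
  also have "\<dots> = inverse q * fWW q m w"
    unfolding fWW_def sum_distrib_left inv_powi
    by (rule sum.cong[OF refl]) (rule powi_eq1[OF assms], simp add: of_nat_diff)
  finally show ?thesis .
qed

lemma fGG_X: "fGG q n (X # w) = 0"
  unfolding fGG_def by (simp add: wstar_Cons)

lemma fGG_Y0: "fGG q 0 (Y # w) = 0"
  unfolding fGG_def by (simp add: wstar_Cons)

lemma fGG_YS: assumes "q \<noteq> 0" shows "fGG q (Suc m) (Y # w) = inverse q * fA q m w + q * fB q m w"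
proof -
  have "fGG q (Suc m) (Y # w) = (\<Sum>k\<le>Suc m. q powi (int (Suc m) - 2*int k) *
      ((if k = 0 then 0 else wstar q (Wneg (k-1)) (G (Suc m - k)) w) +
       (if Suc m - k = 0 then 0 else wstar q (G k) (Wneg (m - k)) w)))"
    unfolding fGG_def by (rule sum.cong[OF refl]) (simp add: wstar_Cons)
  also have "\<dots> = (\<Sum>k\<le>Suc m. q powi (int (Suc m) - 2*int k) * (if k = 0 then 0 else wstar q (Wneg (k-1)) (G (Suc m - k)) w))
     + (\<Sum>k\<le>Suc m. q powi (int (Suc m) - 2*int k) * (if Suc m - k = 0 then 0 else wstar q (G k) (Wneg (m - k)) w))"
    by (simp add: distrib_left sum.distrib)
  also have "(\<Sum>k\<le>Suc m. q powi (int (Suc m) - 2*int k) * (if k = 0 then 0 else wstar q (Wneg (k-1)) (G (Suc m - k)) w))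
      = inverse q * fA q m w"
    unfolding fA_def sum_distrib_left sum.atMost_Suc_shift
    apply simp
    apply (rule sum.cong[OF refl])
    apply (simp only: inv_powi)
    apply (rule powi_eq1[OF assms])
    apply simp
    done
  also have "(\<Sum>k\<le>Suc m. q powi (int (Suc m) - 2*int k) * (if Suc m - k = 0 then 0 else wstar q (G k) (Wneg (m - k)) w))
      = (\<Sum>k\<le>m. q powi (int (Suc m) - 2*int k) * wstar q (G k) (Wneg (m - k)) w)"
    by (simp only: sum.atMost_Suc) (auto intro!: sum.cong)
  also have "\<dots> = (\<Sum>k\<le>m. q powi (int (Suc m) - 2*int (m-k)) * wstar q (G (m-k)) (Wneg k) w)"
    by (subst sum_rev_atMost) (rule sum.cong[OF refl], simp)
  also have "\<dots> = q * fB q m w"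
    unfolding fB_def sum_distrib_left
    by (rule sum.cong[OF refl]) (subst power_int_1_right[symmetric], rule powi_eq1[OF assms], simp add: of_nat_diff)
  finally show ?thesis .
qed

lemma fWW_X: assumes "q \<noteq> 0" shows "fWW q n (X # w) = q * q * fA q n w + fB q n w"
proof -
  have "fWW q n (X # w) = (\<Sum>k\<le>n. q powi (int n - 2*int k) * wstar q (G k) (Wneg (n-k)) w)
       + (\<Sum>k\<le>n. q powi (int n - 2*int k) * (q powi 2 * wstar q (Wneg k) (G (n-k)) w))"
    unfolding fWW_def by (simp add: wstar_Cons distrib_left sum.distrib)
  also have "(\<Sum>k\<le>n. q powi (int n - 2*int k) * wstar q (G k) (Wneg (n-k)) w) = fB q n w"
    unfolding fB_def by (subst sum_rev_atMost) (rule sum.cong[OF refl], simp add: of_nat_diff)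
  also have "(\<Sum>k\<le>n. q powi (int n - 2*int k) * (q powi 2 * wstar q (Wneg k) (G (n-k)) w)) = q * q * fA q n w"
    unfolding fA_def sum_distrib_left
    by (rule sum.cong[OF refl]) (simp add: power2_eq_square mult.assoc mult.left_commute)
  finally show ?thesis by simp
qed

lemma fWW_Y: "fWW q n (Y # w) = 0"
  unfolding fWW_def by (simp add: wstar_Cons)


lemma sys1:
  assumes q: "(q::'a::field) \<noteq> 0"
  shows "\<forall>n. fA q n w = tR q n w \<and> fB q n w = tR q n w \<and> fGG q n w = tGG q n w \<and> fWW q n w = tWW q n w"
proof (induction w)
  case Nil
  then show ?case by (simp add: fA_Nil fB_Nil fGG_Nil fWW_Nil tR_Nil tGG_Nil tWW_Nil)
next
  case (Cons c w)
  show ?case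
  proof
    fix n
    show "fA q n (c # w) = tR q n (c # w) \<and> fB q n (c # w) = tR q n (c # w) \<and>
          fGG q n (c # w) = tGG q n (c # w) \<and> fWW q n (c # w) = tWW q n (c # w)"
    proof (cases c)
      case X
      have cc: "q * q * tR q n w + tR q n w = q * cc q * tR q n w"
        using q by (simp add: cc_def field_simps)
      show ?thesis using Cons.IH X cc
        by (simp add: fA_X fB_X fGG_X fWW_X[OF q] tR_X tGG_X tWW_X)
    next
      case Y
      show ?thesis
      proof (cases n)
        case 0
        then show ?thesis using Y
          by (simp add: fA_Y0 fB_Y0 fGG_Y0 fWW_Y tR_Y0 tGG_Y0 tWW_Y)
      next
        case (Suc m)
        have cc: "inverse q * tR q m w + q * tR q m w = cc q * tR q m w"
          by (simp add: cc_def field_simps)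
        show ?thesis using Cons.IH Y Suc cc
          by (simp add: fA_YS[OF q] fB_YS[OF q] fGG_YS[OF q] fWW_Y tR_YS[OF q] tGG_YS tWW_Y)
      qed
    qed
  qed
qed


definition fC :: "'a::field \<Rightarrow> nat \<Rightarrow> 'a vec" where
  "fC q n w = (\<Sum>k\<le>n. q powi (int n - 2*int k) * wstar q (G (n-k)) (Wpos k) w)"
definition fD :: "'a::field \<Rightarrow> nat \<Rightarrow> 'a vec" where
  "fD q n w = (\<Sum>k\<le>n. q powi (2*int k - int n) * wstar q (Wpos k) (G (n-k)) w)"
definition fE :: "'a::field \<Rightarrow> nat \<Rightarrow> 'a vec" where
  "fE q n w = (\<Sum>k\<le>n. q powi (int n - 2*int k) * wstar q (Gt (n-k)) (Wneg k) w)"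
definition fF :: "'a::field \<Rightarrow> nat \<Rightarrow> 'a vec" where
  "fF q n w = (\<Sum>k\<le>n. q powi (2*int k - int n) * wstar q (Wneg k) (Gt (n-k)) w)"
definition fS :: "'a::field \<Rightarrow> nat \<Rightarrow> 'a vec" where
  "fS q n w = (\<Sum>k\<le>n. q powi (int n - 2*int k) *
     (wstar q (G (n-k)) (Gt k) w + (if k < n then wstar q (Wneg (n-1-k)) (Wpos k) w else 0)))"
definition fT :: "'a::field \<Rightarrow> nat \<Rightarrow> 'a vec" where
  "fT q n w = (\<Sum>k\<le>n. q powi (2*int k - int n) *
     (wstar q (Gt k) (G (n-k)) w + (if k < n then q powi 2 * wstar q (Wpos k) (Wneg (n-1-k)) w else 0)))"

lemma fE_swap: "fE q n w = fC q n (map other w)"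
  unfolding fE_def fC_def by (simp add: wstar_swap')
lemma fF_swap: "fF q n w = fD q n (map other w)"
  unfolding fF_def fD_def by (simp add: wstar_swap')

lemma fC_Nil: "fC q n [] = 0" by (simp add: fC_def wstar_Nil)
lemma fD_Nil: "fD q n [] = 0" by (simp add: fD_def wstar_Nil)
lemma fS_Nil: "fS q n [] = (if n = 0 then 1 else 0)"
proof -
  have "fS q n [] = (\<Sum>k\<le>n. if k = 0 then (if n = 0 then 1 else 0) else 0)"
    unfolding fS_def by (rule sum.cong) (auto simp: wstar_Nil)
  then show ?thesis by (simp add: sum.delta')
qed
lemma fT_Nil: "fT q n [] = (if n = 0 then 1 else 0)"
proof -
  have "fT q n [] = (\<Sum>k\<le>n. if k = 0 then (if n = 0 then 1 else 0) else 0)"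
    unfolding fT_def by (rule sum.cong) (auto simp: wstar_Nil)
  then show ?thesis by (simp add: sum.delta')
qed

lemma fC_X: "fC q n (X # w) = 0"
  unfolding fC_def by (simp add: wstar_Cons)
lemma fD_X: "fD q n (X # w) = 0"
  unfolding fD_def by (simp add: wstar_Cons)

lemma fC_Y: "fC q n (Y # w) = fS q n w"
  unfolding fC_def fS_def by (rule sum.cong[OF refl]) (auto simp: wstar_Cons diff_commute)

lemma fD_Y: "fD q n (Y # w) = fT q n w"
  unfolding fD_def fT_def by (rule sum.cong[OF refl]) (auto simp: wstar_Cons diff_commute)

lemma fS_0: "fS q 0 (c # w) = 0"
  unfolding fS_def by (simp add: wstar_Cons)
lemma fT_0: "fT q 0 (c # w) = 0"
  unfolding fT_def by (simp add: wstar_Cons)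

lemma sum_rev_cong: "(\<And>k. k \<le> m \<Longrightarrow> f k = g (m - k)) \<Longrightarrow> (\<Sum>k\<le>m. f k) = (\<Sum>k\<le>(m::nat). g k)"
  by (subst (2) sum_rev_atMost) (rule sum.cong, auto)

lemma last_part:
  "(\<Sum>k\<le>Suc m. (h k :: 'a::field) * (if k < Suc m then f k else 0)) = (\<Sum>k\<le>m. h k * f k)"
  by (simp only: sum.atMost_Suc) (auto intro!: sum.cong)

lemma last_part':
  "(\<Sum>k\<le>Suc m. (h k :: 'a::field) * (if Suc m - k = 0 then 0 else f k)) = (\<Sum>k\<le>m. h k * f k)"
  by (simp only: sum.atMost_Suc) (auto intro!: sum.cong)

lemma cc_comb: "inverse q * (a::'a::field) + q * a = cc q * a" "q * a + inverse q * a = cc q * a"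
  by (simp_all add: cc_def algebra_simps)

lemma fS_XS: assumes q: "(q::'a::field) \<noteq> 0" shows "fS q (Suc m) (X # w) = cc q * fC q m w"
proof -
  have "fS q (Suc m) (X # w) =
     (\<Sum>k\<le>Suc m. q powi (int (Suc m) - 2*int k) * (if k = 0 then 0 else wstar q (G (Suc m - k)) (Wpos (k-1)) w))
   + (\<Sum>k\<le>Suc m. q powi (int (Suc m) - 2*int k) * (if k < Suc m then wstar q (G (m-k)) (Wpos k) w else 0))"
    unfolding fS_def sum.distrib[symmetric]
    by (rule sum.cong[OF refl]) (auto simp: wstar_Cons distrib_left)
  also have "(\<Sum>k\<le>Suc m. q powi (int (Suc m) - 2*int k) * (if k = 0 then 0 else wstar q (G (Suc m - k)) (Wpos (k-1)) w))
      = inverse q * fC q m w"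
    unfolding fC_def sum_distrib_left sum.atMost_Suc_shift
    apply simp
    apply (rule sum.cong[OF refl])
    apply (simp only: inv_powi)
    apply (rule powi_eq1[OF q])
    apply simp
    done
  also have "(\<Sum>k\<le>Suc m. q powi (int (Suc m) - 2*int k) * (if k < Suc m then wstar q (G (m-k)) (Wpos k) w else 0))
      = q * fC q m w"
    unfolding last_part fC_def sum_distrib_left
    by (rule sum.cong[OF refl]) (subst power_int_1_right[symmetric], rule powi_eq1[OF q], simp)
  finally show ?thesis by (simp add: cc_comb)
qed

lemma fS_YS: assumes q: "(q::'a::field) \<noteq> 0" shows "fS q (Suc m) (Y # w) = cc q * fF q m w"
proof -
  have "fS q (Suc m) (Y # w) =
     (\<Sum>k\<le>Suc m. q powi (int (Suc m) - 2*int k) * (if Suc m - k = 0 then 0 else wstar q (Wneg (m - k)) (Gt k) w))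
   + (\<Sum>k\<le>Suc m. q powi (int (Suc m) - 2*int k) * (if k < Suc m then q powi (-2) * wstar q (Wneg (m-k)) (Gt k) w else 0))"
    unfolding fS_def sum.distrib[symmetric]
    by (rule sum.cong[OF refl]) (auto simp: wstar_Cons distrib_left)
  also have "(\<Sum>k\<le>Suc m. q powi (int (Suc m) - 2*int k) * (if Suc m - k = 0 then 0 else wstar q (Wneg (m - k)) (Gt k) w))
      = q * fF q m w"
    unfolding last_part' fF_def sum_distrib_left
    apply (rule sum_rev_cong)
    apply (simp only: diff_diff_cancel)
    apply (subst power_int_1_right[symmetric], rule powi_eq1[OF q], simp add: of_nat_diff)
    done
  also have "(\<Sum>k\<le>Suc m. q powi (int (Suc m) - 2*int k) * (if k < Suc m then q powi (-2) * wstar q (Wneg (m-k)) (Gt k) w else 0))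
      = inverse q * fF q m w"
    unfolding last_part fF_def sum_distrib_left inv_powi
    apply (rule sum_rev_cong)
    apply (simp only: diff_diff_cancel)
    apply (rule powi_eq[OF q], simp add: of_nat_diff)
    done
  finally show ?thesis by (simp add: cc_comb)
qed

lemma fT_XS: assumes q: "(q::'a::field) \<noteq> 0" shows "fT q (Suc m) (X # w) = cc q * fD q m w"
proof -
  have "fT q (Suc m) (X # w) =
     (\<Sum>k\<le>Suc m. q powi (2*int k - int (Suc m)) * (if k = 0 then 0 else wstar q (Wpos (k-1)) (G (Suc m - k)) w))
   + (\<Sum>k\<le>Suc m. q powi (2*int k - int (Suc m)) * (if k < Suc m then q powi 2 * (q powi (-2) * wstar q (Wpos k) (G (m-k)) w) else 0))"
    unfolding fT_def sum.distrib[symmetric]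
    by (rule sum.cong[OF refl]) (auto simp: wstar_Cons distrib_left)
  also have "(\<Sum>k\<le>Suc m. q powi (2*int k - int (Suc m)) * (if k = 0 then 0 else wstar q (Wpos (k-1)) (G (Suc m - k)) w))
      = q * fD q m w"
    unfolding fD_def sum_distrib_left sum.atMost_Suc_shift
    apply simp
    apply (rule sum.cong[OF refl])
    apply (subst power_int_1_right[symmetric], rule powi_eq1[OF q])
    apply simp
    done
  also have "(\<Sum>k\<le>Suc m. q powi (2*int k - int (Suc m)) * (if k < Suc m then q powi 2 * (q powi (-2) * wstar q (Wpos k) (G (m-k)) w) else 0))
      = inverse q * fD q m w"
    unfolding last_part fD_def sum_distrib_left
    apply (rule sum.cong[OF refl])
    apply (simp only: inv_powi mult.assoc[symmetric] power_int_add[symmetric, OF disjI1[OF q]])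
    apply (rule arg_cong2[where f="(*)"])
     apply (rule arg_cong[where f="power_int q"])
     apply simp
    apply (rule refl)
    done
  finally show ?thesis by (simp add: cc_comb)
qed

lemma fT_YS: assumes q: "(q::'a::field) \<noteq> 0" shows "fT q (Suc m) (Y # w) = cc q * fE q m w"
proof -
  have "fT q (Suc m) (Y # w) =
     (\<Sum>k\<le>Suc m. q powi (2*int k - int (Suc m)) * (if Suc m - k = 0 then 0 else wstar q (Gt k) (Wneg (m - k)) w))
   + (\<Sum>k\<le>Suc m. q powi (2*int k - int (Suc m)) * (if k < Suc m then q powi 2 * wstar q (Gt k) (Wneg (m-k)) w else 0))"
    unfolding fT_def sum.distrib[symmetric]
    by (rule sum.cong[OF refl]) (auto simp: wstar_Cons distrib_left)
  also have "(\<Sum>k\<le>Suc m. q powi (2*int k - int (Suc m)) * (if Suc m - k = 0 then 0 else wstar q (Gt k) (Wneg (m - k)) w))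
      = inverse q * fE q m w"
    unfolding last_part' fE_def sum_distrib_left inv_powi
    apply (rule sum_rev_cong)
    apply (simp only: diff_diff_cancel)
    apply (rule powi_eq1[OF q], simp add: of_nat_diff)
    done
  also have "(\<Sum>k\<le>Suc m. q powi (2*int k - int (Suc m)) * (if k < Suc m then q powi 2 * wstar q (Gt k) (Wneg (m-k)) w else 0))
      = q * fE q m w"
    unfolding last_part fE_def sum_distrib_left
    apply (rule sum_rev_cong)
    apply (simp only: diff_diff_cancel)
    apply (subst power_int_1_right[symmetric], rule powi_eq[OF q], simp add: of_nat_diff)
    done
  finally show ?thesis by (simp add: cc_comb)
qed


lemma sys2:
  assumes q: "(q::'a::field) \<noteq> 0"
  shows "\<forall>n. fC q n w = tY q n w \<and> fD q n w = tY q n w \<and> fS q n w = tS q n w \<and> fT q n w = tS q n w"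
proof (induction w rule: length_induct)
  case (1 w0)
  show ?case
  proof (cases w0)
    case Nil
    then show ?thesis by (simp add: fC_Nil fD_Nil fS_Nil fT_Nil tY_Nil tS_Nil)
  next
    case (Cons c w)
    have IH1: "\<forall>n. fC q n w = tY q n w \<and> fD q n w = tY q n w \<and> fS q n w = tS q n w \<and> fT q n w = tS q n w"
      using 1 Cons by simp
    have IH2: "\<forall>n. fC q n (map other w) = tY q n (map other w) \<and> fD q n (map other w) = tY q n (map other w)"
      using 1 Cons by simp
    have E: "fE q n w = tXr q n w" and F: "fF q n w = tXr q n w" for n
      using IH2 by (simp_all add: fE_swap fF_swap tXr_swap)
    show ?thesis
    proof
      fix n
      show "fC q n w0 = tY q n w0 \<and> fD q n w0 = tY q n w0 \<and> fS q n w0 = tS q n w0 \<and> fT q n w0 = tS q n w0"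
      proof (cases n)
        case 0
        then show ?thesis using Cons IH1
          by (cases c) (simp_all add: fC_X fD_X fC_Y fD_Y fS_0 fT_0 tY_X tY_Y tS_0)
      next
        case (Suc m)
        then show ?thesis using Cons IH1 E F
          by (cases c) (simp_all add: fC_X fD_X fC_Y fD_Y fS_XS[OF q] fT_XS[OF q] fS_YS[OF q] fT_YS[OF q]
                tY_X tY_Y tS_XS tS_YS)
      qed
    qed
  qed
qed

lemma sw1: "wstar q (Gt j) (Wpos k) x = wstar q (G j) (Wneg k) (map other x)"
  by (simp add: wstar_swap')
lemma sw2: "wstar q (Wpos k) (Gt j) x = wstar q (Wneg k) (G j) (map other x)"
  by (simp add: wstar_swap')

theorem proposition12p5:
  fixes q :: "'a::field" and n :: nat
  assumes "q \<noteq> 0" and "\<forall>m::nat. m > 0 \<longrightarrow> q ^ m \<noteq> 1"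
  shows
   "(\<lambda>w. \<Sum>k\<le>n. q powi (2*int k - int n) * star q (word (G (n-k))) (word (Wneg k)) w)
      = (\<lambda>w. \<Sum>k\<le>n. q powi (int n - 2*int k) * star q (word (Wneg k)) (word (G (n-k))) w)
    \<and> (\<lambda>w. \<Sum>k\<le>n. q powi (int n - 2*int k) * star q (word (Wneg k)) (word (G (n-k))) w)
      = smul (qint q 2 ^ n) (cmul (cpow xyyx n) (word [X]))
    \<and> (\<lambda>w. \<Sum>k\<le>n. q powi (int n - 2*int k) * star q (word (G (n-k))) (word (Wpos k)) w)
      = (\<lambda>w. \<Sum>k\<le>n. q powi (2*int k - int n) * star q (word (Wpos k)) (word (G (n-k))) w)
    \<and> (\<lambda>w. \<Sum>k\<le>n. q powi (2*int k - int n) * star q (word (Wpos k)) (word (G (n-k))) w)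
      = smul (qint q 2 ^ n) (cmul (word [Y]) (cpow xyyx n))
    \<and> (\<lambda>w. \<Sum>k\<le>n. q powi (int n - 2*int k) * star q (word (Gt (n-k))) (word (Wneg k)) w)
      = (\<lambda>w. \<Sum>k\<le>n. q powi (2*int k - int n) * star q (word (Wneg k)) (word (Gt (n-k))) w)
    \<and> (\<lambda>w. \<Sum>k\<le>n. q powi (2*int k - int n) * star q (word (Wneg k)) (word (Gt (n-k))) w)
      = smul (qint q 2 ^ n) (cmul (word [X]) (cpow xyyx n))
    \<and> (\<lambda>w. \<Sum>k\<le>n. q powi (2*int k - int n) * star q (word (Gt (n-k))) (word (Wpos k)) w)
      = (\<lambda>w. \<Sum>k\<le>n. q powi (int n - 2*int k) * star q (word (Wpos k)) (word (Gt (n-k))) w)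
    \<and> (\<lambda>w. \<Sum>k\<le>n. q powi (int n - 2*int k) * star q (word (Wpos k)) (word (Gt (n-k))) w)
      = smul (qint q 2 ^ n) (cmul (cpow xyyx n) (word [Y]))"
proof -
  have q0: "q \<noteq> 0" using assms(1) .
  have q2: "q ^ 2 \<noteq> 1" using assms(2) by auto
  have d: "q - inverse q \<noteq> 0"
  proof
    assume "q - inverse q = 0"
    then have "q * q = 1" using q0 by (simp add: field_simps)
    then show False using q2 by (simp add: power2_eq_square)
  qed
  have "q ^ 2 - inverse q ^ 2 = (q - inverse q) * (q + inverse q)"
    by (simp add: power2_eq_square algebra_simps)
  then have qi: "qint q 2 = cc q"
    using d by (simp add: qint_def cc_def)
  have s1: "\<forall>n. fA q n w = tR q n w \<and> fB q n w = tR q n w" for w using sys1[OF q0] by blast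
  have s2: "\<forall>n. fC q n w = tY q n w \<and> fD q n w = tY q n w" for w using sys2[OF q0] by blast
  have A: "(\<lambda>w. \<Sum>k\<le>n. q powi (int n - 2*int k) * star q (word (Wneg k)) (word (G (n-k))) w) = tR q n"
    using s1 by (simp add: star_word fun_eq_iff fA_def[symmetric])
  have B: "(\<lambda>w. \<Sum>k\<le>n. q powi (2*int k - int n) * star q (word (G (n-k))) (word (Wneg k)) w) = tR q n"
    using s1 by (simp add: star_word fun_eq_iff fB_def[symmetric])
  have C: "(\<lambda>w. \<Sum>k\<le>n. q powi (int n - 2*int k) * star q (word (G (n-k))) (word (Wpos k)) w) = tY q n"
    using s2 by (simp add: star_word fun_eq_iff fC_def[symmetric])
  have D: "(\<lambda>w. \<Sum>k\<le>n. q powi (2*int k - int n) * star q (word (Wpos k)) (word (G (n-k))) w) = tY q n"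
    using s2 by (simp add: star_word fun_eq_iff fD_def[symmetric])
  have E: "(\<lambda>w. \<Sum>k\<le>n. q powi (int n - 2*int k) * star q (word (Gt (n-k))) (word (Wneg k)) w) = tXr q n"
    using s2 by (simp add: star_word fun_eq_iff fE_def[symmetric] fE_swap tXr_swap)
  have F: "(\<lambda>w. \<Sum>k\<le>n. q powi (2*int k - int n) * star q (word (Wneg k)) (word (Gt (n-k))) w) = tXr q n"
    using s2 by (simp add: star_word fun_eq_iff fF_def[symmetric] fF_swap tXr_swap)
  have G7: "(\<lambda>w. \<Sum>k\<le>n. q powi (2*int k - int n) * star q (word (Gt (n-k))) (word (Wpos k)) w) = (\<lambda>w. tR q n (map other w))"
    using s1 by (simp add: star_word fun_eq_iff sw1 fB_def[symmetric])
  have H: "(\<lambda>w. \<Sum>k\<le>n. q powi (int n - 2*int k) * star q (word (Wpos k)) (word (Gt (n-k))) w) = (\<lambda>w. tR q n (map other w))"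
    using s1 by (simp add: star_word fun_eq_iff sw2 fA_def[symmetric])
  have R4: "(\<lambda>w. tR q n (map other w)) = smul (qint q 2 ^ n) (cmul (cpow xyyx n) (word [Y]))"
    by (simp add: qi tR_def smul_def cmul_swap cpow_swap_fun word_swap_fun fun_eq_iff)
  show ?thesis
    using A B C D E F G7 H R4
    by (simp add: qi smul_def tR_def tY_def tXr_def fun_eq_iff)
qed

end
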